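(* Assume: (A1) $f(x,y)$ and each component of $g(x,y)$ are convex in $y$ for each fixed $x$, and $f,g$ are twice continuously differentiable; (A2) $Y\subseteq\mathbb{R}^m$ is a compact convex set with $\{y:\exists x\in X \text{ such that } g(x,y)\le 0\}\subseteq\mathrm{int}(Y)$; (A3) $F$ and $G$ are twice continuously differentiable; (R1) for each $x\in X$ there exists $y$ with $g(x,y)<0$. Then for any $\overline{\epsilon}\ge0$, $\lim_{\epsilon\downarrow\overline{\epsilon},\,\mu\downarrow0}\mathcal{C}(\epsilon,\mu)=\mathcal{C}(\overline{\epsilon},0)$, and $\mathcal{C}(\epsilon_1,\mu_1)\supseteq\mathcal{C}(\epsilon_2,\mu_2)$ whenever $\epsilon_1\ge\epsilon_2\ge0$ and $\mu_1\ge\mu_2\ge0$.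
   Context: Let $F:\mathbb{R}^n\times\mathbb{R}^m\to\mathbb{R}$, $f:\mathbb{R}^n\times\mathbb{R}^m\to\mathbb{R}$, $g:\mathbb{R}^n\times\mathbb{R}^m\to\mathbb{R}^p$, $G:\mathbb{R}^n\to\mathbb{R}^q$; vector inequalities componentwise; $X=\{x:G(x)\le0\}$. For $\mu\ge0$, $h_\mu(\lambda,x)=\min_y\{\mu\|y\|^2+f(x,y)+\lambda^{\mathsf T}g(x,y):y\in Y\}$ with $Y$ from (A2), and $\mathcal{C}(\epsilon,\mu)=\{(x,y,\lambda): G(x)\le0,\ g(x,y)\le\epsilon,\ \lambda\ge0,\ f(x,y)-h_\mu(\lambda,x)\le\epsilon\}$. Set limits are in the Painlevé–Kuratowski sense (inner and outer limits coincide with the given set). *)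

theory Defs
  imports "HOL-Analysis.Analysis"
begin

definition C2 :: "('a::real_normed_vector \<Rightarrow> 'b::real_normed_vector) \<Rightarrow> bool" where
  "C2 f \<longleftrightarrow> (\<exists>(f' :: 'a \<Rightarrow> 'a \<Rightarrow>\<^sub>L 'b) (f'' :: 'a \<Rightarrow> 'a \<Rightarrow>\<^sub>L ('a \<Rightarrow>\<^sub>L 'b)).
      (\<forall>z. (f has_derivative blinfun_apply (f' z)) (at z)) \<and>
      (\<forall>z. (f' has_derivative blinfun_apply (f'' z)) (at z)) \<and>
      continuous_on UNIV f'')"

text \<open>Lower-level value function h_mu(lambda, x) (minimum over Y, written as infimum).\<close>

definition h_mu ::
  "(real^'m) set \<Rightarrow> (real^'n \<Rightarrow> real^'m \<Rightarrow> real) \<Rightarrow> (real^'n \<Rightarrow> real^'m \<Rightarrow> real^'p)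
   \<Rightarrow> real \<Rightarrow> real^'p \<Rightarrow> real^'n \<Rightarrow> real" where
  "h_mu Y f g \<mu> l x = (INF y\<in>Y. \<mu> * (norm y)^2 + f x y + l \<bullet> g x y)"

definition Cset ::
  "(real^'m) set \<Rightarrow> (real^'n \<Rightarrow> real^'m \<Rightarrow> real) \<Rightarrow> (real^'n \<Rightarrow> real^'m \<Rightarrow> real^'p)
   \<Rightarrow> (real^'n \<Rightarrow> real^'q) \<Rightarrow> real \<Rightarrow> real \<Rightarrow> ((real^'n) \<times> (real^'m) \<times> (real^'p)) set" where
  "Cset Y f g G \<epsilon> \<mu> = {(x, y, l). (\<forall>j. G x $ j \<le> 0) \<and> (\<forall>i. g x y $ i \<le> \<epsilon>) \<and>
      (\<forall>i. 0 \<le> l $ i) \<and> f x y - h_mu Y f g \<mu> l x \<le> \<epsilon>}"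

text \<open>Painleve-Kuratowski inner and outer limits of a set-valued map along a filter.\<close>
definition inner_limit :: "'p filter \<Rightarrow> ('p \<Rightarrow> 'a::metric_space set) \<Rightarrow> 'a set" where
  "inner_limit F S = {z. \<forall>e>0. eventually (\<lambda>p. \<exists>w\<in>S p. dist z w < e) F}"

definition outer_limit :: "'p filter \<Rightarrow> ('p \<Rightarrow> 'a::metric_space set) \<Rightarrow> 'a set" where
  "outer_limit F S = {z. \<forall>e>0. frequently (\<lambda>p. \<exists>w\<in>S p. dist z w < e) F}"

end

theory Submission
  imports Defs
begin

lemma C2_cont: "C2 h \<Longrightarrow> continuous_on UNIV h"
  unfolding C2_def
  by (auto simp: continuous_on_eq_continuous_at intro: has_derivative_continuous)

lemma cont_nth: "continuous_on UNIV h \<Longrightarrow> continuous_on UNIV (\<lambda>x. h x $ i)"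
  by (rule continuous_on_component)

lemma cont_comp2:
  assumes "continuous_on UNIV (\<lambda>p. f (fst p) (snd p))" "continuous_on UNIV A" "continuous_on UNIV B"
  shows "continuous_on UNIV (\<lambda>w. f (A w) (B w))"
  using continuous_on_compose2[OF assms(1) continuous_on_Pair[OF assms(2,3)]] by auto

lemma sep:
  fixes \<Phi> :: "'a::metric_space \<Rightarrow> real"
  assumes "continuous_on UNIV \<Phi>" "\<Phi> z > c"
  shows "\<exists>r>0. \<forall>w. dist z w < r \<longrightarrow> \<Phi> w > c"
proof -
  have "isCont \<Phi> z" using assms(1) by (simp add: continuous_on_eq_continuous_at)
  then obtain r where "r>0" and r: "\<forall>w. dist w z < r \<longrightarrow> dist (\<Phi> w) (\<Phi> z) < \<Phi> z - c"
    unfolding continuous_at_eps_delta using assms(2) by (meson diff_gt_0_iff_gt)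
  have "\<forall>w. dist z w < r \<longrightarrow> \<Phi> w > c"
  proof (intro allI impI)
    fix w assume "dist z w < r"
    hence "dist (\<Phi> w) (\<Phi> z) < \<Phi> z - c" using r by (simp add: dist_commute)
    thus "\<Phi> w > c" by (simp add: dist_real_def)
  qed
  thus ?thesis using \<open>r>0\<close> by blast
qed

lemma islimpt_Q: "(a::real, 0::real) islimpt {(e, m). a \<le> e \<and> 0 \<le> m}"
  unfolding islimpt_approachable
proof (intro allI impI)
  fix e :: real assume "e > 0"
  have "(a + e/2, 0::real) \<in> {(e, m). a \<le> e \<and> (0::real) \<le> m}" using \<open>e>0\<close> by simp
  moreover have "(a + e/2, 0::real) \<noteq> (a, 0) \<and> dist (a + e/2, 0::real) (a, 0) < e"
    using \<open>e>0\<close> by (simp add: dist_Pair_Pair dist_real_def)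
  ultimately show "\<exists>x'\<in>{(e, m). a \<le> e \<and> (0::real) \<le> m}. x' \<noteq> (a, 0) \<and> dist x' (a, 0) < e"
    by blast
qed

lemma ev_small:
  assumes "(\<delta>::real) > 0"
  shows "eventually (\<lambda>p. fst p < a + \<delta> \<and> snd p < \<delta>) (at (a::real, 0::real) within {(e, m). a \<le> e \<and> 0 \<le> m})"
proof -
  have "\<forall>e m. dist (e, m) (a, 0::real) < \<delta> \<longrightarrow> e < a + \<delta> \<and> m < \<delta>"
  proof (intro allI impI)
    fix e m :: real assume h: "dist (e, m) (a, 0) < \<delta>"
    have "dist e a \<le> dist (e, m) (a, 0)" "dist m 0 \<le> dist (e, m) (a, 0)"
      by (simp_all add: dist_Pair_Pair real_sqrt_sum_squares_ge1 real_sqrt_sum_squares_ge2)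
    thus "e < a + \<delta> \<and> m < \<delta>" using h by (auto simp: dist_real_def)
  qed
  thus ?thesis unfolding eventually_at using assms by (auto intro!: exI[of _ \<delta>])
qed

theorem proposition6:
  fixes F :: "real^'n \<Rightarrow> real^'m \<Rightarrow> real"
    and f :: "real^'n \<Rightarrow> real^'m \<Rightarrow> real"
    and g :: "real^'n \<Rightarrow> real^'m \<Rightarrow> real^'p"
    and G :: "real^'n \<Rightarrow> real^'q"
    and Y :: "(real^'m) set"
    and X :: "(real^'n) set"
    and \<epsilon>bar :: real
  assumes X_def: "X = {x. \<forall>j. G x $ j \<le> 0}"
    and A1_conv_f: "\<And>x. convex_on UNIV (\<lambda>y. f x y)"
    and A1_conv_g: "\<And>x i. convex_on UNIV (\<lambda>y. g x y $ i)"
    and A1_C2_f: "C2 (\<lambda>(x, y). f x y)"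
    and A1_C2_g: "C2 (\<lambda>(x, y). g x y)"
    and A2_compact: "compact Y"
    and A2_convex: "convex Y"
    and A2_int: "{y. \<exists>x\<in>X. \<forall>i. g x y $ i \<le> 0} \<subseteq> interior Y"
    and A3_F: "C2 (\<lambda>(x, y). F x y)"
    and A3_G: "C2 G"
    and R1: "\<And>x. x \<in> X \<Longrightarrow> \<exists>y. \<forall>i. g x y $ i < 0"
    and eps: "\<epsilon>bar \<ge> 0"
  shows "inner_limit (at (\<epsilon>bar, 0) within {(e, m). \<epsilon>bar \<le> e \<and> 0 \<le> m})
             (\<lambda>(e, m). Cset Y f g G e m) = Cset Y f g G \<epsilon>bar 0
       \<and> outer_limit (at (\<epsilon>bar, 0) within {(e, m). \<epsilon>bar \<le> e \<and> 0 \<le> m})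
             (\<lambda>(e, m). Cset Y f g G e m) = Cset Y f g G \<epsilon>bar 0
       \<and> (\<forall>\<epsilon>1 \<epsilon>2 \<mu>1 \<mu>2. \<epsilon>1 \<ge> \<epsilon>2 \<and> \<epsilon>2 \<ge> 0 \<and> \<mu>1 \<ge> \<mu>2 \<and> \<mu>2 \<ge> 0 \<longrightarrow>
            Cset Y f g G \<epsilon>2 \<mu>2 \<subseteq> Cset Y f g G \<epsilon>1 \<mu>1)"
proof -
  have cf: "continuous_on UNIV (\<lambda>p. f (fst p) (snd p))"
    using C2_cont[OF A1_C2_f] by (simp add: case_prod_beta')
  have cg: "continuous_on UNIV (\<lambda>p. g (fst p) (snd p))"
    using C2_cont[OF A1_C2_g] by (simp add: case_prod_beta')
  have cG: "continuous_on UNIV G" using C2_cont[OF A3_G] .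
  have bdd: "bdd_below ((\<lambda>y. m * (norm y)^2 + f x y + l \<bullet> g x y) ` Y)" for m x l
  proof -
    have "continuous_on UNIV (\<lambda>y. m * (norm y)^2 + f x y + l \<bullet> g x y)"
      by (intro continuous_intros cont_comp2[OF cf] cont_comp2[OF cg])
    hence "compact ((\<lambda>y. m * (norm y)^2 + f x y + l \<bullet> g x y) ` Y)"
      by (intro compact_continuous_image A2_compact) (auto intro: continuous_on_subset)
    thus ?thesis by (intro bounded_imp_bdd_below compact_imp_bounded)
  qed
  have hmono: "h_mu Y f g m2 l x \<le> h_mu Y f g m1 l x" if "m2 \<le> m1" for m1 m2 l x
  proof (cases "Y = {}")
    case True thus ?thesis by (simp add: h_mu_def)
  next
    case False
    show ?thesis unfolding h_mu_def
    proof (rule cINF_mono[OF False bdd])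
      fix y assume "y \<in> Y"
      have "m2 * (norm y)^2 \<le> m1 * (norm y)^2" using that by (intro mult_right_mono) auto
      thus "\<exists>n\<in>Y. m2 * (norm n)^2 + f x n + l \<bullet> g x n \<le> m1 * (norm y)^2 + f x y + l \<bullet> g x y"
        using \<open>y\<in>Y\<close> by force
    qed
  qed
  have mono: "Cset Y f g G e2 m2 \<subseteq> Cset Y f g G e1 m1" if "e2 \<le> e1" "m2 \<le> m1" for e1 e2 m1 m2
  proof
    fix z assume "z \<in> Cset Y f g G e2 m2"
    then obtain x y l where z: "z = (x,y,l)" "\<forall>j. G x $ j \<le> 0" "\<forall>i. g x y $ i \<le> e2"
      "\<forall>i. 0 \<le> l $ i" "f x y - h_mu Y f g m2 l x \<le> e2"
      unfolding Cset_def by auto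
    have "h_mu Y f g m2 l x \<le> h_mu Y f g m1 l x" using hmono[OF that(2)] .
    hence "f x y - h_mu Y f g m1 l x \<le> e1" using z(5) that(1) by linarith
    moreover have "\<forall>i. g x y $ i \<le> e1" using z(3) that(1) order_trans by blast
    ultimately show "z \<in> Cset Y f g G e1 m1" using z unfolding Cset_def by simp
  qed
  define Q where "Q = {(e, m). \<epsilon>bar \<le> e \<and> 0 \<le> (m::real)}"
  define FF where "FF = at (\<epsilon>bar, 0::real) within Q"
  have FFnb: "FF \<noteq> bot" unfolding FF_def Q_def
    using trivial_limit_within islimpt_Q by blast
  have evQ: "eventually (\<lambda>p. p \<in> Q) FF" unfolding FF_def by (simp add: eventually_at_filter)
  have C_inner: "Cset Y f g G \<epsilon>bar 0 \<subseteq> inner_limit FF (\<lambda>(e, m). Cset Y f g G e m)"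
  proof
    fix z assume z: "z \<in> Cset Y f g G \<epsilon>bar 0"
    show "z \<in> inner_limit FF (\<lambda>(e, m). Cset Y f g G e m)"
      unfolding inner_limit_def
    proof (intro CollectI allI impI)
      fix r :: real assume "r > 0"
      show "eventually (\<lambda>p. \<exists>w\<in>(\<lambda>(e, m). Cset Y f g G e m) p. dist z w < r) FF"
        using evQ
      proof (rule eventually_mono)
        fix p assume "p \<in> Q"
        then obtain e m where "p = (e,m)" "\<epsilon>bar \<le> e" "0 \<le> m" unfolding Q_def by auto
        hence "z \<in> (\<lambda>(e, m). Cset Y f g G e m) p" using mono[of \<epsilon>bar e 0 m] z by auto
        thus "\<exists>w\<in>(\<lambda>(e, m). Cset Y f g G e m) p. dist z w < r" using \<open>r>0\<close> by force
      qed
    qed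
  qed
  have inner_outer: "inner_limit FF S \<subseteq> outer_limit FF S" for S :: "real \<times> real \<Rightarrow> ((real^'n) \<times> (real^'m) \<times> (real^'p)) set"
    unfolding inner_limit_def outer_limit_def using eventually_frequently[OF FFnb] by blast
  have outer_C: "outer_limit FF (\<lambda>(e, m). Cset Y f g G e m) \<subseteq> Cset Y f g G \<epsilon>bar 0"
  proof
    fix z assume zo: "z \<in> outer_limit FF (\<lambda>(e, m). Cset Y f g G e m)"
    have contra: False if Phi: "continuous_on UNIV \<Phi>" "\<Phi> z > (c::real)" "\<delta> > 0"
      "\<And>e m w. \<epsilon>bar \<le> e \<Longrightarrow> e < \<epsilon>bar + \<delta> \<Longrightarrow> 0 \<le> m \<Longrightarrow> m < \<delta> \<Longrightarrow> w \<in> Cset Y f g G e m \<Longrightarrow> \<Phi> w \<le> c"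
      for \<Phi> c \<delta>
    proof -
      obtain r where r: "r > 0" "\<forall>w. dist z w < r \<longrightarrow> \<Phi> w > c" using sep[OF Phi(1,2)] by blast
      have "eventually (\<lambda>p. \<not> (\<exists>w\<in>(\<lambda>(e, m). Cset Y f g G e m) p. dist z w < r)) FF"
        using evQ ev_small[OF Phi(3), of \<epsilon>bar, folded Q_def FF_def]
      proof eventually_elim
        case (elim p)
        then obtain e m where p: "p = (e,m)" "\<epsilon>bar \<le> e" "0 \<le> m" "e < \<epsilon>bar + \<delta>" "m < \<delta>"
          unfolding Q_def by auto
        show ?case using Phi(4)[OF p(2,4,3,5)] r(2) p(1) by force
      qed
      moreover have "frequently (\<lambda>p. \<exists>w\<in>(\<lambda>(e, m). Cset Y f g G e m) p. dist z w < r) FF"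
        using zo r(1) unfolding outer_limit_def by blast
      ultimately show False by (simp add: frequently_def)
    qed
    obtain x y l where zxyl: "z = (x, y, l)" by (cases z) auto
    have memC: "w \<in> Cset Y f g G e m \<Longrightarrow> (\<forall>j. G (fst w) $ j \<le> 0) \<and> (\<forall>i. g (fst w) (fst (snd w)) $ i \<le> e)
       \<and> (\<forall>i. 0 \<le> snd (snd w) $ i) \<and> f (fst w) (fst (snd w)) - h_mu Y f g m (snd (snd w)) (fst w) \<le> e" for w e m
      by (cases w) (auto simp: Cset_def)
    have cfst: "continuous_on UNIV (\<lambda>w::(real^'n) \<times> (real^'m) \<times> (real^'p). fst w)"
      and cfs: "continuous_on UNIV (\<lambda>w::(real^'n) \<times> (real^'m) \<times> (real^'p). fst (snd w))"
      and css: "continuous_on UNIV (\<lambda>w::(real^'n) \<times> (real^'m) \<times> (real^'p). snd (snd w))"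
      by (intro continuous_intros)+
    show "z \<in> Cset Y f g G \<epsilon>bar 0"
    proof (rule ccontr)
      assume nz: "z \<notin> Cset Y f g G \<epsilon>bar 0"
      consider (G) j where "G x $ j > 0" | (g) i where "g x y $ i > \<epsilon>bar" | (l) i where "l $ i < 0"
        | (h) "f x y - h_mu Y f g 0 l x > \<epsilon>bar"
      proof -
        have "\<not> ((\<forall>j. G x $ j \<le> 0) \<and> (\<forall>i. g x y $ i \<le> \<epsilon>bar) \<and> (\<forall>i. 0 \<le> l $ i)
               \<and> f x y - h_mu Y f g 0 l x \<le> \<epsilon>bar)"
          using nz unfolding zxyl Cset_def by simp
        thus thesis using that by (auto simp: not_le)
      qed
      then show False
      proof cases
        case G
        show False
        proof (rule contra[of "\<lambda>w. G (fst w) $ j" 0 1])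
          show "continuous_on UNIV (\<lambda>w::(real^'n) \<times> (real^'m) \<times> (real^'p). G (fst w) $ j)"
          proof -
            have "continuous_on UNIV (\<lambda>w::(real^'n) \<times> (real^'m) \<times> (real^'p). G (fst w))"
              using continuous_on_compose2[OF cG cfst] by auto
            thus ?thesis by (rule continuous_on_component)
          qed
          show "0 < G (fst z) $ j" using G zxyl by simp
          fix e m w assume "\<epsilon>bar \<le> e" "e < \<epsilon>bar + 1" "0 \<le> m" "m < 1" "w \<in> Cset Y f g G e m"
          thus "G (fst w) $ j \<le> 0" using memC[of w e m] by blast
        qed simp
      next
        case g
        define d where "d = (g x y $ i - \<epsilon>bar) / 2"
        have d: "d > 0" using g by (simp add: d_def)
        show False
        proof (rule contra[of "\<lambda>w. g (fst w) (fst (snd w)) $ i" "\<epsilon>bar + d" d])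
          show "continuous_on UNIV (\<lambda>w::(real^'n) \<times> (real^'m) \<times> (real^'p). g (fst w) (fst (snd w)) $ i)"
            by (intro continuous_intros cont_comp2[OF cg cfst cfs])
          show "\<epsilon>bar + d < g (fst z) (fst (snd z)) $ i" using g zxyl by (simp add: d_def field_simps)
          fix e m w assume "\<epsilon>bar \<le> e" "e < \<epsilon>bar + d" "w \<in> Cset Y f g G e m"
          hence "g (fst w) (fst (snd w)) $ i \<le> e" using memC[of w e m] by blast
          thus "g (fst w) (fst (snd w)) $ i \<le> \<epsilon>bar + d" using \<open>e < \<epsilon>bar + d\<close> by linarith
        qed (use d in auto)
      next
        case l
        show False
        proof (rule contra[of "\<lambda>w. - (snd (snd w) $ i)" 0 1])
          show "continuous_on UNIV (\<lambda>w::(real^'n) \<times> (real^'m) \<times> (real^'p). - (snd (snd w) $ i))"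
            by (intro continuous_intros)
          show "0 < - (snd (snd z) $ i)" using l zxyl by simp
          fix e m w assume "\<epsilon>bar \<le> e" "e < \<epsilon>bar + 1" "0 \<le> m" "m < 1" "w \<in> Cset Y f g G e m"
          hence "0 \<le> snd (snd w) $ i" using memC[of w e m] by blast
          thus "- (snd (snd w) $ i) \<le> 0" by simp
        qed simp
      next
        case h
        show False
        proof (cases "Y = {}")
          case True
          define K where "K = h_mu Y f g 0 l x"
          have hK: "h_mu Y f g m l' x' = K" for m l' x' using True by (simp add: K_def h_mu_def)
          define d where "d = (f x y - K - \<epsilon>bar) / 2"
          have d: "d > 0" using h by (simp add: d_def K_def)
          show False
          proof (rule contra[of "\<lambda>w. f (fst w) (fst (snd w)) - K" "\<epsilon>bar + d" d])
            show "continuous_on UNIV (\<lambda>w::(real^'n) \<times> (real^'m) \<times> (real^'p). f (fst w) (fst (snd w)) - K)"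
              by (intro continuous_intros cont_comp2[OF cf cfst cfs])
            show "\<epsilon>bar + d < f (fst z) (fst (snd z)) - K" using h zxyl by (simp add: d_def K_def field_simps)
            fix e m w assume "\<epsilon>bar \<le> e" "e < \<epsilon>bar + d" "w \<in> Cset Y f g G e m"
            hence "f (fst w) (fst (snd w)) - h_mu Y f g m (snd (snd w)) (fst w) \<le> e" using memC[of w e m] by blast
            thus "f (fst w) (fst (snd w)) - K \<le> \<epsilon>bar + d" using hK \<open>e < \<epsilon>bar + d\<close> by simp
          qed (use d in auto)
        next
          case False
          define d where "d = (f x y - \<epsilon>bar - h_mu Y f g 0 l x) / 4"
          have d: "d > 0" using h by (simp add: d_def)
          have "Inf ((\<lambda>y. 0 * (norm y)^2 + f x y + l \<bullet> g x y) ` Y) < h_mu Y f g 0 l x + d"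
            using d by (simp add: h_mu_def)
          then obtain y0 where y0: "y0 \<in> Y" "0 * (norm y0)^2 + f x y0 + l \<bullet> g x y0 < h_mu Y f g 0 l x + d"
            using cInf_lessD[of "(\<lambda>y. 0 * (norm y)^2 + f x y + l \<bullet> g x y) ` Y"] False by blast
          define \<delta> where "\<delta> = min d (d / ((norm y0)^2 + 1))"
          have \<delta>: "\<delta> > 0" using d by (simp add: \<delta>_def add_nonneg_pos)
          show False
          proof (rule contra[of "\<lambda>w. f (fst w) (fst (snd w)) - (f (fst w) y0 + snd (snd w) \<bullet> g (fst w) y0)"
                 "\<epsilon>bar + 2 * d" \<delta>])
            show "continuous_on UNIV (\<lambda>w::(real^'n) \<times> (real^'m) \<times> (real^'p). f (fst w) (fst (snd w)) - (f (fst w) y0 + snd (snd w) \<bullet> g (fst w) y0))"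
              by (intro continuous_intros cont_comp2[OF cf cfst cfs] cont_comp2[OF cf cfst] cont_comp2[OF cg cfst])
            show "\<epsilon>bar + 2 * d < f (fst z) (fst (snd z)) - (f (fst z) y0 + snd (snd z) \<bullet> g (fst z) y0)"
              using y0 zxyl d by (simp add: d_def field_simps)
            fix e m w assume em: "\<epsilon>bar \<le> e" "e < \<epsilon>bar + \<delta>" "0 \<le> m" "m < \<delta>" "w \<in> Cset Y f g G e m"
            have hle: "h_mu Y f g m (snd (snd w)) (fst w) \<le> m * (norm y0)^2 + f (fst w) y0 + snd (snd w) \<bullet> g (fst w) y0"
              unfolding h_mu_def by (rule cINF_lower[OF bdd y0(1)])
            have "m * (norm y0)^2 \<le> \<delta> * ((norm y0)^2 + 1)"
              using em(3,4) by (intro mult_mono) auto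
            also have "\<dots> \<le> d / ((norm y0)^2 + 1) * ((norm y0)^2 + 1)"
              by (rule mult_right_mono) (simp_all add: \<delta>_def)
            also have "\<dots> = d"
            proof -
              have "(norm y0)^2 + 1 > (0::real)" by (simp add: add_nonneg_pos)
              thus ?thesis by simp
            qed
            finally have "m * (norm y0)^2 \<le> d" .
            moreover have "\<delta> \<le> d" by (simp add: \<delta>_def)
            ultimately show "f (fst w) (fst (snd w)) - (f (fst w) y0 + snd (snd w) \<bullet> g (fst w) y0) \<le> \<epsilon>bar + 2 * d"
              using memC[OF em(5)] hle em(2) by linarith
          qed (use \<delta> in auto)
        qed
      qed
    qed
  qed
  have "inner_limit FF (\<lambda>(e, m). Cset Y f g G e m) = Cset Y f g G \<epsilon>bar 0"
       "outer_limit FF (\<lambda>(e, m). Cset Y f g G e m) = Cset Y f g G \<epsilon>bar 0"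
    using C_inner inner_outer[of "\<lambda>(e, m). Cset Y f g G e m"] outer_C by blast+
  thus ?thesis using mono unfolding FF_def Q_def by auto
qed

end
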